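(* Let $\alpha=m+n\gamma^{-1}\in\mathbb{Z}[\gamma]$ with $m,n\in\mathbb{Z}$ and $\alpha>0$, and let $\mathbf i=(i_1,\dots,i_s)$ be a representation of $\alpha$. Then $d(\mathbf i)\ge|m|+|n|$, $d_1(\mathbf i)\ge|m|$ and $d_2(\mathbf i)\ge|n|$. If $i_s\le1$ or if $i_1,\dots,i_s$ all have the same parity, then $d(\mathbf i)=|m|+|n|$ and $(d_1(\mathbf i),d_2(\mathbf i))=(|m|,|n|)$; otherwise $d(\mathbf i)>|m|+|n|$ and $(d_1(\mathbf i),d_2(\mathbf i))\neq(|m|,|n|)$. Moreover, $d_2(\mathbf i)>|n|$ whenever $i_1,\dots,i_s$ contains two positive integers of different parity.
   Context: Let $f\colon\mathbb{Z}\to\mathbb{Z}$ be defined by $f(0)=f(1)=1$, $f(i+2)=f(i+1)+f(i)$ for all $i\in\mathbb{Z}$; $\gamma=(1+\sqrt5)/2$; $\mathbb{Z}[\gamma]=\mathbb{Z}\oplus\mathbb{Z}\gamma^{-1}$. A representation of $\alpha\in\mathbb{Z}[\gamma]$ is a finite non-decreasing sequence $\mathbf i=(i_1,\dots,i_s)$ of non-negative integers ($s\ge0$) with $\alpha=\gamma^{-i_1}+\dots+\gamma^{-i_s}$ (empty sum $=0$). For such $\mathbf i$: $d(\mathbf i)=\sum_k f(i_k)$, $d_1(\mathbf i)=\sum_k f(i_k-2)$, $d_2(\mathbf i)=\sum_kf(i_k-1)$. *)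

theory Defs
  imports Complex_Main
begin

fun Fb :: "nat \<Rightarrow> int" where
  "Fb 0 = 0"
| "Fb (Suc 0) = 1"
| "Fb (Suc (Suc n)) = Fb (Suc n) + Fb n"

(* f : Z -> Z with f 0 = f 1 = 1 and f (i+2) = f (i+1) + f i for all integers i,
   i.e. f i = Fib (i+1), extended to negative indices by Fib(-k) = (-1)^(k+1) Fib k. *)
definition f :: "int \<Rightarrow> int" where
  "f i = (if i \<ge> 0 then Fb (nat i + 1) else (-1) ^ nat (-i) * Fb (nat (-i) - 1))"

lemma f_0: "f 0 = 1" and f_1: "f 1 = 1"
  by (simp_all add: f_def)

lemma Fb_rec: "Fb (Suc (Suc k)) = Fb (Suc k) + Fb k" by simp

lemma f_rec: "f (i + 2) = f (i + 1) + f i"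
proof (cases "i \<ge> 0")
  case True
  define k where "k = nat i"
  have "nat (i + 2) + 1 = Suc (Suc (Suc k))" "nat (i + 1) + 1 = Suc (Suc k)" "nat i + 1 = Suc k"
    "0 \<le> i + 2" "0 \<le> i + 1"
    using True by (simp_all add: k_def)
  then show ?thesis using True unfolding f_def by (simp only: if_True Fb.simps)
next
  case False
  obtain k where k: "i = - int (Suc k)" 
    by (rule that[of "nat (-i) - 1"]) (use False in linarith)
  consider "k = 0" | "k = 1" | l where "k = Suc (Suc l)" 
    by (cases k; cases "k - 1"; simp)
  then show ?thesis
  proof cases
    case 1 then show ?thesis using k by (simp add: f_def)
  next
    case 2 then show ?thesis using k by (simp add: f_def)
  next
    case 3
    have a: "nat (- i) = Suc (Suc (Suc l))" and b: "nat (- (i+1)) = Suc (Suc l)"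
      and c: "nat (- (i+2)) = Suc l" and "\<not> 0 \<le> i" "\<not> 0 \<le> i + 1" "\<not> 0 \<le> i + 2"
      using k 3 by simp_all
    then show ?thesis unfolding f_def by (simp add: algebra_simps)
  qed
qed

definition gam :: real where "gam = (1 + sqrt 5) / 2"

definition repval :: "nat list \<Rightarrow> real" where
  "repval is = (\<Sum>i\<leftarrow>is. inverse (gam ^ i))"

definition d :: "nat list \<Rightarrow> int" where
  "d is = (\<Sum>i\<leftarrow>is. f (int i))"

definition d1 :: "nat list \<Rightarrow> int" where
  "d1 is = (\<Sum>i\<leftarrow>is. f (int i - 2))"

definition d2 :: "nat list \<Rightarrow> int" where
  "d2 is = (\<Sum>i\<leftarrow>is. f (int i - 1))"

end

theory Submission
  imports Defs
begin

lemma no_sqrt5_nat: "q > 0 \<Longrightarrow> p^2 \<noteq> 5 * (q::nat)^2"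
proof (induction q arbitrary: p rule: less_induct)
  case (less q)
  show ?case
  proof
    assume h: "p^2 = 5 * q^2"
    have "p^2 mod 5 = 0" using h by simp
    moreover have "p^2 mod 5 = (p mod 5)^2 mod 5" by (simp add: power_mod)
    moreover have "p mod 5 < 5" by simp
    moreover have "p mod 5 = 0 \<or> p mod 5 = 1 \<or> p mod 5 = 2 \<or> p mod 5 = 3 \<or> p mod 5 = 4" by auto
    ultimately have "p mod 5 = 0" by (auto simp: power2_eq_square)
    then obtain r where r: "p = 5 * r" by auto
    have "q^2 = 5 * r^2" using h r by (simp add: power2_eq_square)
    moreover have "r < q"
    proof (rule ccontr)
      assume "\<not> r < q" then have "q \<le> r" by simp
      then have "q^2 \<le> r^2" by (simp add: power_mono)
      then show False using \<open>q^2 = 5 * r^2\<close> less.prems by (simp add: power2_eq_square)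
    qed
    moreover have "r > 0" using calculation less.prems by (cases "r = 0") (auto simp: power2_eq_square)
    ultimately show False using less.IH by blast
  qed
qed


lemma no_sqrt5_int:
  fixes a b :: int assumes "b \<noteq> 0" shows "real_of_int b * sqrt 5 \<noteq> real_of_int a"
proof
  assume h: "real_of_int b * sqrt 5 = real_of_int a"
  then have "(real_of_int b * sqrt 5)^2 = (real_of_int a)^2" by simp
  then have "real_of_int (5 * b^2) = real_of_int (a^2)" by (simp add: power_mult_distrib)
  then have "5 * b^2 = a^2" by linarith
  then have "int (5 * (nat \<bar>b\<bar>)^2) = int ((nat \<bar>a\<bar>)^2)" by simp
  then have "(nat \<bar>a\<bar>)^2 = 5 * (nat \<bar>b\<bar>)^2" by linarith
  with no_sqrt5_nat[of "nat \<bar>b\<bar>" "nat \<bar>a\<bar>"] assms show False by simp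
qed

definition g :: real where "g = inverse gam"

lemma g_eq: "g = (sqrt 5 - 1) / 2"
proof -
  have "gam * ((sqrt 5 - 1) / 2) = 1" by (simp add: gam_def algebra_simps)
  then show ?thesis unfolding g_def by (metis inverse_unique)
qed

lemma g_sq: "g * g = 1 - g"
proof -
  have s5: "sqrt 5 * sqrt 5 = 5" by simp
  show ?thesis using s5 unfolding g_eq by (simp add: field_simps)
qed

lemma aux2: "(y::real) = 2*((y-1)/2)+1" by (simp add: field_simps)

lemma uniq:
  fixes a b c e :: int
  assumes "real_of_int a + real_of_int b * g = real_of_int c + real_of_int e * g"
  shows "a = c \<and> b = e"
proof -
  have 1: "real_of_int (b-e) * g = real_of_int (c - a)"
    using assms unfolding of_int_diff left_diff_distrib by linarith
  have "sqrt 5 = 2 * g + 1" unfolding g_eq by (rule aux2)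
  then have "real_of_int (b-e) * sqrt 5 = 2 * (real_of_int (b-e) * g) + real_of_int (b-e)"
    by (simp add: distrib_left)
  also have "\<dots> = 2 * real_of_int (c - a) + real_of_int (b - e)" by (simp only: 1)
  also have "\<dots> = real_of_int (2 * (c - a) + (b - e))" by simp
  finally have eq: "real_of_int (b - e) * sqrt 5 = real_of_int (2 * (c - a) + (b - e))" .
  have "b - e = 0"
  proof (rule ccontr)
    assume "b - e \<noteq> 0"
    from no_sqrt5_int[OF this] eq show False by blast
  qed
  then have "b = e" by simp
  then show ?thesis using assms by simp
qed

definition xc :: "nat \<Rightarrow> int" where "xc i = (-1)^i * f (int i - 2)"
definition yc :: "nat \<Rightarrow> int" where "yc i = - ((-1)^i * f (int i - 1))"

lemma f_nonneg: "k \<ge> 0 \<Longrightarrow> f k > 0"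
proof -
  have "Fb (Suc n) > 0" for n by (induction n rule: Fb.induct) auto
  then show "k \<ge> 0 \<Longrightarrow> f k > 0" unfolding f_def by simp
qed

lemma f_m1: "f (-1) = 0" and f_m2: "f (-2) = 1" by (simp_all add: f_def)

lemma f2_pos: "i \<noteq> 1 \<Longrightarrow> f (int i - 2) > 0"
  using f_nonneg[of "int i - 2"] f_m2 by (cases i; cases "i - 1"; auto)
lemma f2_one: "f (int 1 - 2) = 0" using f_m1 by simp
lemma f1_pos: "i \<noteq> 0 \<Longrightarrow> f (int i - 1) > 0"
  using f_nonneg[of "int i - 1"] by (cases i; auto)
lemma f1_zero: "f (int 0 - 1) = 0" using f_m1 by simp

lemma absx: "\<bar>xc i\<bar> = f (int i - 2)"
  using f2_pos[of i] f2_one by (cases "i = 1") (auto simp: xc_def abs_mult)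
lemma absy: "\<bar>yc i\<bar> = f (int i - 1)"
  using f1_pos[of i] f1_zero by (cases "i = 0") (auto simp: yc_def abs_mult)

lemma gam_pow: "inverse (gam ^ i) = real_of_int (xc i) + real_of_int (yc i) * g"
proof (induction i)
  case 0 then show ?case by (simp add: xc_def yc_def f_m1 f_m2)
next
  case (Suc i)
  have fr: "f (int i) = f (int i - 1) + f (int i - 2)"
    using f_rec[of "int i - 2"] by simp
  have "inverse (gam ^ Suc i) = inverse (gam ^ i) * g"
    by (simp add: g_def mult.commute)
  also have "\<dots> = real_of_int (xc i) * g + real_of_int (yc i) * (g * g)"
    using Suc by (simp add: algebra_simps)
  also have "\<dots> = real_of_int (yc i) + real_of_int (xc i - yc i) * g"
    by (simp add: g_sq algebra_simps)
  also have "xc i - yc i = yc (Suc i)"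
    by (simp add: xc_def yc_def fr algebra_simps)
  also have "yc i = xc (Suc i)"
    by (simp add: xc_def yc_def algebra_simps)
  finally show ?case .
qed

lemma repval_eq: "repval is = real_of_int (\<Sum>i\<leftarrow>is. xc i) + real_of_int (\<Sum>i\<leftarrow>is. yc i) * g"
  unfolding repval_def
  by (induction "is") (auto simp: gam_pow algebra_simps)

lemma d1_eq: "d1 is = (\<Sum>i\<leftarrow>is. \<bar>xc i\<bar>)" unfolding d1_def by (simp add: absx)
lemma d2_eq: "d2 is = (\<Sum>i\<leftarrow>is. \<bar>yc i\<bar>)" unfolding d2_def by (simp add: absy)
lemma d_eq: "d is = d1 is + d2 is"
proof -
  have "f (int i) = f (int i - 1) + f (int i - 2)" for i
    using f_rec[of "int i - 2"] by simp
  then show ?thesis unfolding d_def d1_def d2_def by (simp add: sum_list_addf)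
qed

lemma abs_le: "\<bar>\<Sum>i\<leftarrow>xs. (h i::int)\<bar> \<le> (\<Sum>i\<leftarrow>xs. \<bar>h i\<bar>)"
  by (induction xs) (auto intro: order.trans[OF abs_triangle_ineq])

lemma neg_sum: "(\<Sum>i\<leftarrow>xs. - (h i::int)) = - (\<Sum>i\<leftarrow>xs. h i)"
  by (induction xs) auto

lemma abs_eq: "(\<forall>i\<in>set xs. (h i::int) \<ge> 0) \<or> (\<forall>i\<in>set xs. h i \<le> 0) \<Longrightarrow>
   \<bar>\<Sum>i\<leftarrow>xs. h i\<bar> = (\<Sum>i\<leftarrow>xs. \<bar>h i\<bar>)"
proof (elim disjE)
  assume a: "\<forall>i\<in>set xs. h i \<ge> 0"
  then have "(\<Sum>i\<leftarrow>xs. \<bar>h i\<bar>) = (\<Sum>i\<leftarrow>xs. h i)" by (intro arg_cong[where f=sum_list] map_cong) auto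
  moreover have "(\<Sum>i\<leftarrow>xs. h i) \<ge> 0" using a by (intro sum_list_nonneg) auto
  ultimately show ?thesis by simp
next
  assume a: "\<forall>i\<in>set xs. h i \<le> 0"
  then have "(\<Sum>i\<leftarrow>xs. \<bar>h i\<bar>) = (\<Sum>i\<leftarrow>xs. - h i)" by (intro arg_cong[where f=sum_list] map_cong) auto
  moreover have "(\<Sum>i\<leftarrow>xs. - h i) \<ge> 0" using a by (intro sum_list_nonneg) auto
  ultimately show ?thesis by (simp add: neg_sum)
qed

lemma pos_sum: "(\<forall>i\<in>set xs. (h i::int) \<ge> 0) \<Longrightarrow> a \<in> set xs \<Longrightarrow> h a > 0 \<Longrightarrow> (\<Sum>i\<leftarrow>xs. h i) > 0"
proof (induction xs)
  case Nil then show ?case by simp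
next
  case (Cons x xs)
  have "(\<Sum>i\<leftarrow>xs. h i) \<ge> 0" using Cons.prems by (intro sum_list_nonneg) auto
  then show ?case using Cons by auto
qed

lemma abs_lt: "a \<in> set xs \<Longrightarrow> b \<in> set xs \<Longrightarrow> (h a::int) > 0 \<Longrightarrow> h b < 0 \<Longrightarrow>
   \<bar>\<Sum>i\<leftarrow>xs. h i\<bar> < (\<Sum>i\<leftarrow>xs. \<bar>h i\<bar>)"
proof -
  assume ab: "a \<in> set xs" "b \<in> set xs" "h a > 0" "h b < 0"
  have 1: "(\<Sum>i\<leftarrow>xs. \<bar>h i\<bar> + h i) > 0" by (rule pos_sum[of _ _ a]) (use ab in auto)
  have 2: "(\<Sum>i\<leftarrow>xs. \<bar>h i\<bar> - h i) > 0" by (rule pos_sum[of _ _ b]) (use ab in auto)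
  show ?thesis using 1 2 by (simp add: sum_list_addf sum_list_subtractf)
qed


lemma sorted_le_last: "sorted xs \<Longrightarrow> x \<in> set xs \<Longrightarrow> x \<le> last (xs::nat list)"
  by (induction xs) (auto simp: last_in_set)

lemma xpos: "i \<noteq> 1 \<Longrightarrow> even i \<Longrightarrow> xc i > 0" using f2_pos[of i] by (simp add: xc_def)
lemma xneg: "i \<noteq> 1 \<Longrightarrow> odd i \<Longrightarrow> xc i < 0" using f2_pos[of i] by (simp add: xc_def)
lemma ypos: "i \<noteq> 0 \<Longrightarrow> odd i \<Longrightarrow> yc i > 0" using f1_pos[of i] by (simp add: yc_def)
lemma yneg: "i \<noteq> 0 \<Longrightarrow> even i \<Longrightarrow> yc i < 0" using f1_pos[of i] by (simp add: yc_def)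
lemma x1: "xc 1 = 0" using f2_one by (simp add: xc_def)
lemma y0: "yc 0 = 0" using f1_zero by (simp add: yc_def)

lemma xge: "even i \<Longrightarrow> xc i \<ge> 0" using xpos[of i] by (cases "i = 1") auto
lemma xle: "odd i \<Longrightarrow> xc i \<le> 0" using xneg[of i] x1 by (cases "i = 1") auto
lemma yle: "even i \<Longrightarrow> yc i \<le> 0" using yneg[of i] y0 by (cases "i = 0") auto
lemma yge: "odd i \<Longrightarrow> yc i \<ge> 0" using ypos[of i] by (cases "i = 0") auto

theorem mainTheorem13:
  fixes m n :: int and "is" :: "nat list"
  assumes pos: "real_of_int m + real_of_int n * inverse gam > 0"
    and srt: "sorted is"
    and rep: "repval is = real_of_int m + real_of_int n * inverse gam"
  shows "(d is \<ge> \<bar>m\<bar> + \<bar>n\<bar> \<and> d1 is \<ge> \<bar>m\<bar> \<and> d2 is \<ge> \<bar>n\<bar>)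
    \<and> ((last is \<le> 1 \<or> (\<forall>a\<in>set is. \<forall>b\<in>set is. even a = even b)) \<longrightarrow>
           d is = \<bar>m\<bar> + \<bar>n\<bar> \<and> (d1 is, d2 is) = (\<bar>m\<bar>, \<bar>n\<bar>))
    \<and> (\<not> (last is \<le> 1 \<or> (\<forall>a\<in>set is. \<forall>b\<in>set is. even a = even b)) \<longrightarrow>
           d is > \<bar>m\<bar> + \<bar>n\<bar> \<and> (d1 is, d2 is) \<noteq> (\<bar>m\<bar>, \<bar>n\<bar>))
    \<and> ((\<exists>a\<in>set is. \<exists>b\<in>set is. 0 < a \<and> 0 < b \<and> even a \<noteq> even b) \<longrightarrow> d2 is > \<bar>n\<bar>)"
proof -
  have "real_of_int m + real_of_int n * g = real_of_int (\<Sum>i\<leftarrow>is. xc i) + real_of_int (\<Sum>i\<leftarrow>is. yc i) * g"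
    using rep repval_eq[of "is"] by (simp add: g_def)
  then have u: "m = (\<Sum>i\<leftarrow>is. xc i) \<and> n = (\<Sum>i\<leftarrow>is. yc i)" by (rule uniq)
  then have mn: "m = (\<Sum>i\<leftarrow>is. xc i)" "n = (\<Sum>i\<leftarrow>is. yc i)" by simp_all
  have ne: "is \<noteq> []"
  proof
    assume "is = []"
    then have "repval is = 0" by (simp add: repval_def)
    with pos rep show False by simp
  qed
  have D1: "d1 is = (\<Sum>i\<leftarrow>is. \<bar>xc i\<bar>)" and D2: "d2 is = (\<Sum>i\<leftarrow>is. \<bar>yc i\<bar>)"
    and D: "d is = d1 is + d2 is" using d1_eq d2_eq d_eq by auto
  have le1: "d1 is \<ge> \<bar>m\<bar>" unfolding D1 mn by (rule abs_le)
  have le2: "d2 is \<ge> \<bar>n\<bar>" unfolding D2 mn by (rule abs_le)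
  have P1: "d2 is > \<bar>n\<bar>" if "a \<in> set is" "b \<in> set is" "0 < a" "0 < b" "even a" "odd b" for a b
  proof -
    have 1: "yc b > 0" by (rule ypos) (use that in auto)
    have 2: "yc a < 0" by (rule yneg) (use that in auto)
    have "\<bar>\<Sum>i\<leftarrow>is. yc i\<bar> < (\<Sum>i\<leftarrow>is. \<bar>yc i\<bar>)"
      by (rule abs_lt[of b "is" a]) (use that 1 2 in auto)
    then show ?thesis by (simp only: D2 mn)
  qed
  have P2: "d1 is > \<bar>m\<bar>" if "a \<in> set is" "b \<in> set is" "b \<noteq> 1" "a \<noteq> 1" "even a" "odd b" for a b
  proof -
    have 1: "xc a > 0" by (rule xpos) (use that in auto)
    have 2: "xc b < 0" by (rule xneg) (use that in auto)
    have "\<bar>\<Sum>i\<leftarrow>is. xc i\<bar> < (\<Sum>i\<leftarrow>is. \<bar>xc i\<bar>)"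
      by (rule abs_lt[of a "is" b]) (use that 1 2 in auto)
    then show ?thesis by (simp only: D1 mn)
  qed
  have last4: "d2 is > \<bar>n\<bar>" if ex: "\<exists>a\<in>set is. \<exists>b\<in>set is. 0 < a \<and> 0 < b \<and> even a \<noteq> even b"
  proof -
    obtain a b where ab: "a \<in> set is" "b \<in> set is" "0 < a" "0 < b" "even a \<noteq> even b"
      using ex by blast
    show ?thesis
    proof (cases "even a")
      case True
      then show ?thesis using P1[of a b] ab by simp
    next
      case False
      then show ?thesis using P1[of b a] ab by simp
    qed
  qed
  have eqc: "d1 is = \<bar>m\<bar> \<and> d2 is = \<bar>n\<bar>"
    if "last is \<le> 1 \<or> (\<forall>a\<in>set is. \<forall>b\<in>set is. even a = even b)"
  proof (cases "last is \<le> 1")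
    case True
    then have "last is \<le> 1" .
    then have "\<forall>i\<in>set is. i \<le> 1" using sorted_le_last[OF srt] by fastforce
    then have "\<forall>i\<in>set is. xc i \<ge> 0" "\<forall>i\<in>set is. yc i \<ge> 0"
      using xge yge x1 y0 by (auto simp: le_Suc_eq)
    then show ?thesis using abs_eq[of "is" xc] abs_eq[of "is" yc] D1 D2 mn by auto
  next
    case False
    then have all: "\<forall>a\<in>set is. \<forall>b\<in>set is. even a = even b" using that by blast
    have h: "hd is \<in> set is" using ne by simp
    show ?thesis
    proof (cases "even (hd is)")
      case True
      then have "\<forall>i\<in>set is. xc i \<ge> 0" "\<forall>i\<in>set is. yc i \<le> 0"
        using all h xge yle True by metis+
      then show ?thesis using abs_eq[of "is" xc] abs_eq[of "is" yc] D1 D2 mn by auto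
    next
      case False
      then have "\<forall>i\<in>set is. xc i \<le> 0" "\<forall>i\<in>set is. yc i \<ge> 0"
        using all h xle yge False by metis+
      then show ?thesis using abs_eq[of "is" xc] abs_eq[of "is" yc] D1 D2 mn by auto
    qed
  qed
  have neqc: "d1 is > \<bar>m\<bar> \<or> d2 is > \<bar>n\<bar>"
    if nc: "\<not> (last is \<le> 1 \<or> (\<forall>a\<in>set is. \<forall>b\<in>set is. even a = even b))"
  proof -
    have nl: "\<not> last is \<le> 1" using nc by blast
    obtain c where c: "c \<in> set is" "c \<ge> 2"
    proof (rule that[of "last is"])
      show "last is \<in> set is" using ne by (rule last_in_set)
      show "last is \<ge> 2" using nl by simp
    qed
    obtain a0 b0 where ab0: "a0 \<in> set is" "b0 \<in> set is" "even a0 \<noteq> even b0"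
      using nc by blast
    obtain a b where ab: "a \<in> set is" "b \<in> set is" "even a" "odd b"
    proof (cases "even a0")
      case True
      then show ?thesis using that[of a0 b0] ab0 by simp
    next
      case False
      then show ?thesis using that[of b0 a0] ab0 by simp
    qed
    show ?thesis
    proof (cases "a > 0")
      case True
      then show ?thesis using P1[of a b] ab by (cases b) auto
    next
      case False
      then have a0: "a = 0" by simp
      show ?thesis
      proof (cases "b = 1")
        case False
        then show ?thesis using P2[of a b] ab a0 by auto
      next
        case True
        show ?thesis
        proof (cases "even c")
          case True
          then show ?thesis using P1[of c b] c ab \<open>b = 1\<close> by auto
        next
          case False
          then show ?thesis using P2[of a c] c ab a0 by auto
        qed
      qed
    qed
  qed
  have A: "d is \<ge> \<bar>m\<bar> + \<bar>n\<bar> \<and> d1 is \<ge> \<bar>m\<bar> \<and> d2 is \<ge> \<bar>n\<bar>"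
    using le1 le2 D by linarith
  have B: "(last is \<le> 1 \<or> (\<forall>a\<in>set is. \<forall>b\<in>set is. even a = even b)) \<longrightarrow>
           d is = \<bar>m\<bar> + \<bar>n\<bar> \<and> (d1 is, d2 is) = (\<bar>m\<bar>, \<bar>n\<bar>)"
  proof
    assume h: "last is \<le> 1 \<or> (\<forall>a\<in>set is. \<forall>b\<in>set is. even a = even b)"
    from eqc[OF h] show "d is = \<bar>m\<bar> + \<bar>n\<bar> \<and> (d1 is, d2 is) = (\<bar>m\<bar>, \<bar>n\<bar>)"
      using D by simp
  qed
  have C: "(\<not> (last is \<le> 1 \<or> (\<forall>a\<in>set is. \<forall>b\<in>set is. even a = even b))) \<longrightarrow>
           d is > \<bar>m\<bar> + \<bar>n\<bar> \<and> (d1 is, d2 is) \<noteq> (\<bar>m\<bar>, \<bar>n\<bar>)"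
  proof
    assume h: "\<not> (last is \<le> 1 \<or> (\<forall>a\<in>set is. \<forall>b\<in>set is. even a = even b))"
    from neqc[OF h] show "d is > \<bar>m\<bar> + \<bar>n\<bar> \<and> (d1 is, d2 is) \<noteq> (\<bar>m\<bar>, \<bar>n\<bar>)"
      using D le1 le2 by auto
  qed
  have E: "(\<exists>a\<in>set is. \<exists>b\<in>set is. 0 < a \<and> 0 < b \<and> even a \<noteq> even b) \<longrightarrow> d2 is > \<bar>n\<bar>"
    using last4 by blast
  show ?thesis by (rule conjI[OF A conjI[OF B conjI[OF C E]]])
qed

end
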